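(* Let $n\ge 4$ be an integer and let $QD_{2^n}=\langle a,b : a^{2^{n-1}}=b^2=1,\ bab^{-1}=a^{2^{n-2}-1}\rangle$ be the quasidihedral group of order $2^n$. Let $\Gamma_{QD_{2^n}}$ be its non-commuting graph. Let $t_1,t_2$ be the two roots of the equation $(2^{n-1}-2)x^2-(2^n-10)x-2^{n-1}=0$. Then the spectrum of the distance signless Laplacian matrix $D^Q(\Gamma_{QD_{2^n}})$ (eigenvalues counted with multiplicity, multiplicities being added if two of the listed values coincide) consists of: (a) $2^n-4$ with multiplicity $2^{n-2}$; (b) $2^n-2$ with multiplicity $2^{n-2}-1$; (c) $2^n+2^{n-1}-8$ with multiplicity $2^{n-1}-3$; (d) $t_k(2^{n-1}-2)+3\cdot 2^{n-1}-2$ with multiplicity $1$, for each $k=1,2$.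
   Context: For a finite non-abelian group $G$ with centre $Z(G)$, the non-commuting graph $\Gamma_G$ is the simple undirected graph with vertex set $G\setminus Z(G)$, in which two distinct vertices $u,v$ are adjacent if and only if $uv\ne vu$. For a connected graph $H$, $d_{uv}$ denotes the length of a shortest path between $u$ and $v$; the distance matrix $D(H)$ has $(u,v)$-entry $d_{uv}$. The transmission of a vertex $v$ is $\sum_{u} d_{uv}$, and $Tr(H)$ is the diagonal matrix of vertex transmissions. The distance signless Laplacian matrix is $D^Q(H)=Tr(H)+D(H)$. *)

theory Defs
  imports "HOL-Algebra.Group" "HOL-Algebra.Generated_Groups" "Jordan_Normal_Form.Char_Poly"
begin

definition grp_center :: "('a, 'b) monoid_scheme \<Rightarrow> 'a set" where
  "grp_center G = {z \<in> carrier G. \<forall>x \<in> carrier G. z \<otimes>\<^bsub>G\<^esub> x = x \<otimes>\<^bsub>G\<^esub> z}"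

definition ncg_verts :: "('a, 'b) monoid_scheme \<Rightarrow> 'a set" where
  "ncg_verts G = carrier G - grp_center G"

definition ncg_adj :: "('a, 'b) monoid_scheme \<Rightarrow> 'a \<Rightarrow> 'a \<Rightarrow> bool" where
  "ncg_adj G u v \<longleftrightarrow> u \<in> ncg_verts G \<and> v \<in> ncg_verts G \<and> u \<noteq> v \<and>
     u \<otimes>\<^bsub>G\<^esub> v \<noteq> v \<otimes>\<^bsub>G\<^esub> u"

fun ncg_walk :: "('a, 'b) monoid_scheme \<Rightarrow> nat \<Rightarrow> 'a \<Rightarrow> 'a \<Rightarrow> bool" where
  "ncg_walk G 0 u v \<longleftrightarrow> u = v \<and> u \<in> ncg_verts G"
| "ncg_walk G (Suc k) u v \<longleftrightarrow> (\<exists>w. ncg_adj G u w \<and> ncg_walk G k w v)"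

definition ncg_dist :: "('a, 'b) monoid_scheme \<Rightarrow> 'a \<Rightarrow> 'a \<Rightarrow> nat" where
  "ncg_dist G u v = (LEAST k. ncg_walk G k u v)"

definition ncg_transmission :: "('a, 'b) monoid_scheme \<Rightarrow> 'a \<Rightarrow> nat" where
  "ncg_transmission G v = (\<Sum>u \<in> ncg_verts G. ncg_dist G u v)"

text \<open>Distance signless Laplacian D^Q = Tr + D, as a matrix w.r.t. the vertex
  enumeration vs (a list listing every vertex exactly once).\<close>
definition ncg_DQ :: "('a, 'b) monoid_scheme \<Rightarrow> 'a list \<Rightarrow> real mat" where
  "ncg_DQ G vs = mat (length vs) (length vs)
     (\<lambda>(i, j). (if i = j then real (ncg_transmission G (vs ! i)) else 0)
               + real (ncg_dist G (vs ! i) (vs ! j)))"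

end

theory Submission
  imports Defs
begin


definition matf :: "'a list \<Rightarrow> 'a list \<Rightarrow> ('a \<Rightarrow> 'a \<Rightarrow> 'b) \<Rightarrow> 'b mat" where
  "matf xs ys f = mat (length xs) (length ys) (\<lambda>(i,j). f (xs!i) (ys!j))"

lemma matf_carrier[simp]: "matf xs ys f \<in> carrier_mat (length xs) (length ys)"
  by (simp add: matf_def)

lemma matf_dims[simp]: "dim_row (matf xs ys f) = length xs" "dim_col (matf xs ys f) = length ys"
  by (simp_all add: matf_def)

lemma matf_index[simp]: "i < length xs \<Longrightarrow> j < length ys \<Longrightarrow> matf xs ys f $$ (i,j) = f (xs!i) (ys!j)"
  by (simp add: matf_def)

lemma sum_nth_distinct:
  assumes "distinct ys"
  shows "(\<Sum>k\<in>{0..<length ys}. h (ys!k)) = (\<Sum>w\<in>set ys. h w)"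
proof -
  have "set ys = (!) ys ` {0..<length ys}" by (auto simp: set_conv_nth)
  moreover have "inj_on ((!) ys) {0..<length ys}" using assms by (intro inj_on_nth) auto
  ultimately show ?thesis by (simp add: sum.reindex)
qed

lemma matf_mult:
  assumes "distinct ys"
  shows "matf xs ys f * matf ys zs g = matf xs zs (\<lambda>u v. \<Sum>w\<in>set ys. f u w * g w v)"
proof (rule eq_matI)
  fix i j assume i: "i < dim_row (matf xs zs (\<lambda>u v. \<Sum>w\<in>set ys. f u w * g w v))"
    and j: "j < dim_col (matf xs zs (\<lambda>u v. \<Sum>w\<in>set ys. f u w * g w v))"
  have "(matf xs ys f * matf ys zs g) $$ (i,j) = (\<Sum>k\<in>{0..<length ys}. f (xs!i) (ys!k) * g (ys!k) (zs!j))"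
    using i j by (simp add: scalar_prod_def row_def col_def)
  also have "\<dots> = (\<Sum>w\<in>set ys. f (xs!i) w * g w (zs!j))"
    using sum_nth_distinct[OF assms, of "\<lambda>w. f (xs!i) w * g w (zs!j)"] by simp
  finally show "(matf xs ys f * matf ys zs g) $$ (i,j) = matf xs zs (\<lambda>u v. \<Sum>w\<in>set ys. f u w * g w v) $$ (i,j)"
    using i j by simp
qed auto

lemma matf_cong:
  assumes "\<And>u v. u \<in> set xs \<Longrightarrow> v \<in> set ys \<Longrightarrow> f u v = g u v"
  shows "matf xs ys f = matf xs ys g"
  using assms by (intro eq_matI) auto

lemma matf_one:
  assumes "distinct xs"
  shows "matf xs xs (\<lambda>u v. if u = v then 1 else 0) = 1\<^sub>m (length xs)"
  using assms by (intro eq_matI) (auto simp: nth_eq_iff_index_eq)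

lemma similar_from_vertex:
  fixes Mf Rf Sf Tf :: "'a \<Rightarrow> 'a \<Rightarrow> 'b :: field"
  assumes vs: "distinct vs" "set vs = V" and ws: "distinct ws" "set ws = V"
    and TS: "\<And>u v. u \<in> V \<Longrightarrow> v \<in> V \<Longrightarrow> (\<Sum>w\<in>V. Tf u w * Sf w v) = (if u = v then 1 else 0)"
    and TM: "\<And>u v. u \<in> V \<Longrightarrow> v \<in> V \<Longrightarrow> (\<Sum>w\<in>V. Tf u w * Mf w v) = (\<Sum>w\<in>V. Rf u w * Tf w v)"
  shows "char_poly (matf vs vs Mf) = char_poly (matf ws ws Rf)"
proof -
  have len: "length vs = length ws" using vs ws by (metis distinct_card)
  define n where "n = length ws"
  define S where "S = matf vs ws Sf"
  define T where "T = matf ws vs Tf"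
  define Mm where "Mm = matf vs vs Mf"
  define Rm where "Rm = matf ws ws Rf"
  have S: "S \<in> carrier_mat n n" and T: "T \<in> carrier_mat n n" and Mm: "Mm \<in> carrier_mat n n"
    and Rm: "Rm \<in> carrier_mat n n"
    unfolding S_def T_def Mm_def Rm_def n_def using len by (auto simp del: matf_carrier intro: matf_carrier[unfolded len])
  have "T * S = matf ws ws (\<lambda>u v. if u = v then 1 else 0)"
    unfolding T_def S_def using vs ws TS by (simp add: matf_mult, intro matf_cong, auto)
  also have "\<dots> = 1\<^sub>m n" using ws matf_one n_def by blast
  finally have TS1: "T * S = 1\<^sub>m n" .
  have ST1: "S * T = 1\<^sub>m n" using mat_mult_left_right_inverse[OF T S TS1] .
  have "T * Mm = Rm * T"
    unfolding T_def Mm_def Rm_def using vs ws TM by (simp add: matf_mult, intro matf_cong, auto)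
  have "Mm = (S * T) * Mm" using ST1 Mm by simp
  also have "\<dots> = S * (T * Mm)" using S T Mm by (simp add: assoc_mult_mat)
  also have "\<dots> = S * (Rm * T)" using \<open>T * Mm = Rm * T\<close> by simp
  also have "\<dots> = S * Rm * T" using S T Rm by (simp add: assoc_mult_mat)
  finally have "Mm = S * Rm * T" .
  hence "similar_mat_wit Mm Rm S T"
    unfolding similar_mat_wit_def Let_def using S T Mm Rm TS1 ST1 by auto
  hence "similar_mat Mm Rm" unfolding similar_mat_def by blast
  thus ?thesis using char_poly_similar Mm_def Rm_def by blast
qed


lemma prod_nth_distinct:
  assumes "distinct ys"
  shows "(\<Prod>k\<in>{0..<length ys}. h (ys!k)) = (\<Prod>w\<in>set ys. h w)"
proof -
  have "set ys = (!) ys ` {0..<length ys}" by (auto simp: set_conv_nth)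
  moreover have "inj_on ((!) ys) {0..<length ys}" using assms by (intro inj_on_nth) auto
  ultimately show ?thesis by (simp add: prod.reindex)
qed

lemma char_poly_lower:
  fixes Rf :: "'a \<Rightarrow> 'a \<Rightarrow> 'b :: field"
  assumes ws: "distinct ws" "set ws = V" and w0: "ws = a0 # b0 # rest"
    and Z: "\<And>u v. u \<in> V \<Longrightarrow> v \<in> V \<Longrightarrow> u \<noteq> v \<Longrightarrow> v \<noteq> a0 \<Longrightarrow> (v = b0 \<longrightarrow> u = a0) \<Longrightarrow> Rf u v = 0"
  shows "char_poly (matf ws ws Rf) = (\<Prod>u\<in>V. [:- Rf u u, 1:])"
proof -
  define n where "n = length ws"
  define R where "R = matf ws ws Rf"
  have R: "R \<in> carrier_mat n n" unfolding R_def n_def by simp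
  have RT: "transpose_mat R \<in> carrier_mat n n" using R by simp
  have ut: "upper_triangular (transpose_mat R)"
    unfolding upper_triangular_def
  proof (intro allI impI)
    fix i j assume i: "i < dim_row (transpose_mat R)" and ji: "j < i"
    hence i': "i < n" using R by simp
    hence j': "j < n" using ji by simp
    have "transpose_mat R $$ (i,j) = Rf (ws!j) (ws!i)"
      using i' j' R unfolding R_def n_def by simp
    also have "\<dots> = 0"
    proof (rule Z)
      show "ws!j \<in> V" "ws!i \<in> V" using i' j' ws n_def by auto
      show "ws!j \<noteq> ws!i" using ws i' j' ji n_def by (simp add: nth_eq_iff_index_eq)
      have "i \<noteq> 0" using ji by simp
      thus "ws!i \<noteq> a0" using ws i' w0 n_def by (metis nth_Cons_0 nth_eq_iff_index_eq zero_less_iff_neq_zero length_greater_0_conv list.distinct(1))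
      show "ws!i = b0 \<longrightarrow> ws!j = a0"
      proof
        assume "ws!i = b0"
        hence "ws!i = ws!1" using w0 by simp
        moreover have "1 < length ws" using w0 by simp
        ultimately have "i = 1" using ws(1) i' n_def nth_eq_iff_index_eq by blast
        hence "j = 0" using ji by simp
        thus "ws!j = a0" using w0 by simp
      qed
    qed
    finally show "transpose_mat R $$ (i,j) = 0" .
  qed
  have "char_poly R = char_poly (transpose_mat R)" using R by simp
  also have "\<dots> = (\<Prod>a\<leftarrow>diag_mat (transpose_mat R). [:- a, 1:])"
    by (rule char_poly_upper_triangular[OF RT ut])
  also have "\<dots> = (\<Prod>k\<in>{0..<n}. [:- Rf (ws!k) (ws!k), 1:])"
    using R unfolding diag_mat_def R_def n_def
    by (simp add: prod.distinct_set_conv_list[symmetric] o_def)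
  also have "\<dots> = (\<Prod>u\<in>V. [:- Rf u u, 1:])"
    using prod_nth_distinct[OF ws(1), of "\<lambda>u. [:- Rf u u, 1:]"] ws n_def by simp
  finally show ?thesis unfolding R_def .
qed


locale qdg =
  fixes V A B1 B2 :: "'a set" and pi :: "'a \<Rightarrow> 'a" and a0 b0 :: 'a and q :: nat and t :: real
  assumes finV: "finite V" and Vdef: "V = A \<union> B1 \<union> B2"
    and dAB1: "A \<inter> B1 = {}" and dAB2: "A \<inter> B2 = {}" and dB: "B1 \<inter> B2 = {}"
    and cA: "card A = 2 * q - 2" and cB1: "card B1 = q" and cB2: "card B2 = q" and q2: "q \<ge> 2"
    and pi1: "\<And>u. u \<in> B1 \<Longrightarrow> pi u \<in> B2" and pi2: "\<And>u. u \<in> B2 \<Longrightarrow> pi u \<in> B1"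
    and pipi: "\<And>u. u \<in> B1 \<union> B2 \<Longrightarrow> pi (pi u) = u"
    and a0: "a0 \<in> A" and b0: "b0 \<in> B1" and t0: "t \<noteq> 0"
    and teq: "(2 * real q - 2) * t^2 - (4 * real q - 10) * t - 2 * real q = 0"
begin

abbreviation "m \<equiv> 2 * real q"
abbreviation "B \<equiv> B1 \<union> B2"

definition del :: "'a \<Rightarrow> 'a \<Rightarrow> real" where "del x w = (if w = x then 1 else 0)"
definition ind :: "'a set \<Rightarrow> 'a \<Rightarrow> real" where "ind X w = (if w \<in> X then 1 else 0)"

definition Mf :: "'a \<Rightarrow> 'a \<Rightarrow> real" where
  "Mf u v = (if u = v then (if u \<in> A then 3*m-6 else 2*m-2) else if u \<in> A \<and> v \<in> A then 2
     else if u \<in> A \<or> v \<in> A then 1 else if v = pi u then 2 else 1)"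

definition Tf :: "'a \<Rightarrow> 'a \<Rightarrow> real" where
  "Tf u w = (if u = a0 then t * ind A w + ind B w
    else if u = b0 then ind B w
    else if u \<in> A then del u w
    else if u = pi b0 then (del b0 w - del (pi b0) w) / 2 - ind B w / 2
    else if u \<in> B1 then (del u w + del (pi u) w) / 2
    else (del (pi u) w - del u w) / 2)"

definition Sf :: "'a \<Rightarrow> 'a \<Rightarrow> real" where
  "Sf w u = (if u = a0 then del a0 w / t
    else if u = b0 then del b0 w - del a0 w / t
    else if u \<in> A then del u w - del a0 w
    else if u \<in> B1 then del u w + del (pi u) w - del b0 w - del (pi b0) w
    else del (pi u) w - del u w)"

definition Rf :: "'a \<Rightarrow> 'a \<Rightarrow> real" where
  "Rf u v = (if u = a0 then (if v = a0 then t * (m - 2) + 3*m - 2 else 0)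
    else if u = b0 then (if v = a0 then m / t else if v = b0 then 3*m - 2 - m / t else 0)
    else if u \<in> A then (if v = a0 then 2 / t else if v = b0 then 1 - 2 / t else if v = u then 3*m - 8 else 0)
    else if u = pi b0 then (if v = a0 then - m / (2*t) else if v = b0 then - (m+2)/2 + m / (2*t)
       else if v = u then 2*m - 4 else 0)
    else if u \<in> B1 then (if v = a0 then 1 / t else if v = b0 then 1 - 1 / t else if v = u then 2*m - 2 else 0)
    else (if v = u then 2*m - 4 else 0))"

lemma finA: "finite A" and finB1: "finite B1" and finB2: "finite B2" and finB: "finite B"
  using finV Vdef by (auto intro: finite_subset)

lemma facts: "a0 \<noteq> b0" "a0 \<notin> B1" "a0 \<notin> B2" "b0 \<notin> A" "b0 \<notin> B2" "pi b0 \<in> B2" "pi b0 \<notin> A" "pi b0 \<notin> B1"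
  "pi b0 \<noteq> b0" "pi b0 \<noteq> a0" "a0 \<in> V" "b0 \<in> V" "pi b0 \<in> V" "b0 \<noteq> a0" "b0 \<noteq> pi b0" "a0 \<noteq> pi b0"
  using a0 b0 dAB1 dAB2 dB pi1[OF b0] Vdef by auto

lemma sum_del: "x \<in> V \<Longrightarrow> (\<Sum>w\<in>V. del x w * g w) = g x"
proof -
  assume x: "x \<in> V"
  have "(\<Sum>w\<in>V. del x w * g w) = (\<Sum>w\<in>V. if w = x then g w else 0)"
    by (rule sum.cong) (auto simp: del_def)
  also have "\<dots> = g x" using finV x by (simp add: sum.delta)
  finally show ?thesis .
qed

lemma sum_ind: "X \<subseteq> V \<Longrightarrow> (\<Sum>w\<in>V. ind X w * g w) = (\<Sum>w\<in>X. g w)"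
proof -
  assume X: "X \<subseteq> V"
  have "(\<Sum>w\<in>V. ind X w * g w) = (\<Sum>w\<in>V. if w \<in> X then g w else 0)"
    by (rule sum.cong) (auto simp: ind_def)
  also have "\<dots> = (\<Sum>w\<in>V \<inter> X. g w)" using finV by (simp add: sum.inter_restrict)
  also have "V \<inter> X = X" using X by auto
  finally show ?thesis .
qed

lemma sum_del_set: "finite X \<Longrightarrow> (\<Sum>w\<in>X. del x w) = ind X x"
  by (simp add: del_def ind_def)

end

context qdg begin

lemma AV: "A \<subseteq> V" and BV: "B \<subseteq> V" and B1V: "B1 \<subseteq> V" and B2V: "B2 \<subseteq> V" using Vdef by auto

lemma realcA: "real (card A) = m - 2" using cA q2 by simp

lemma colA: "v \<in> V \<Longrightarrow> (\<Sum>w\<in>A. Mf w v) = (if v \<in> A then 5*m - 12 else m - 2)"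
proof -
  assume v: "v \<in> V"
  show ?thesis
  proof (cases "v \<in> A")
    case True
    have "(\<Sum>w\<in>A. Mf w v) = Mf v v + (\<Sum>w\<in>A - {v}. Mf w v)"
      using True finA by (simp add: sum.remove)
    also have "(\<Sum>w\<in>A - {v}. Mf w v) = (\<Sum>w\<in>A - {v}. 2)"
      by (rule sum.cong) (use True in \<open>auto simp: Mf_def\<close>)
    also have "\<dots> = 2 * (m - 3)"
    proof -
      have "card A > 0" using True finA card_gt_0_iff by blast
      hence "real (card (A - {v})) = real (card A) - 1" using True finA by (simp add: card_Diff_singleton of_nat_diff)
      thus ?thesis using realcA by simp
    qed
    finally show ?thesis using True by (simp add: Mf_def)
  next
    case False
    have "(\<Sum>w\<in>A. Mf w v) = (\<Sum>w\<in>A. 1)"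
      by (rule sum.cong) (use False in \<open>auto simp: Mf_def\<close>)
    thus ?thesis using False realcA by simp
  qed
qed

lemma cardB: "real (card B) = m" using cB1 cB2 dB finB1 finB2 by (simp add: card_Un_disjoint)

lemma piB: "u \<in> B \<Longrightarrow> pi u \<in> B"
proof -
  assume "u \<in> B"
  then consider "u \<in> B1" | "u \<in> B2" by blast
  thus ?thesis using pi1 pi2 by cases blast+
qed

lemma pi_neq: "u \<in> B \<Longrightarrow> pi u \<noteq> u"
proof -
  assume "u \<in> B"
  then consider "u \<in> B1" | "u \<in> B2" by blast
  thus ?thesis
  proof cases
    case 1 thus ?thesis using pi1[OF 1] dB by (metis IntI empty_iff)
  next
    case 2 thus ?thesis using pi2[OF 2] dB by (metis IntI empty_iff)
  qed
qed

lemma BnA: "w \<in> B \<Longrightarrow> w \<notin> A" using dAB1 dAB2 by blast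

lemma colB: "v \<in> V \<Longrightarrow> (\<Sum>w\<in>B. Mf w v) = (if v \<in> A then m else 3*m - 2)"
proof -
  assume v: "v \<in> V"
  show ?thesis
  proof (cases "v \<in> A")
    case True
    have "(\<Sum>w\<in>B. Mf w v) = (\<Sum>w\<in>B. 1)"
    proof (rule sum.cong)
      fix w assume w: "w \<in> B"
      hence "w \<notin> A" by (rule BnA)
      hence "w \<noteq> v" using True by blast
      thus "Mf w v = 1" using True \<open>w \<notin> A\<close> unfolding Mf_def by simp
    qed simp
    thus ?thesis using True cardB by simp
  next
    case False
    hence vB: "v \<in> B" using v Vdef by blast
    have pv: "pi v \<in> B" "pi v \<noteq> v" "pi v \<notin> A" using piB[OF vB] pi_neq[OF vB] BnA[OF piB[OF vB]] by auto
    have ppv: "pi (pi v) = v" using pipi vB by blast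
    have "(\<Sum>w\<in>B. Mf w v) = Mf v v + (\<Sum>w\<in>B - {v}. Mf w v)"
      using vB finB by (simp add: sum.remove)
    also have "(\<Sum>w\<in>B - {v}. Mf w v) = Mf (pi v) v + (\<Sum>w\<in>B - {v} - {pi v}. Mf w v)"
      using pv finB by (simp add: sum.remove)
    also have "(\<Sum>w\<in>B - {v} - {pi v}. Mf w v) = (\<Sum>w\<in>B - {v} - {pi v}. 1)"
    proof (rule sum.cong)
      fix w assume w: "w \<in> B - {v} - {pi v}"
      have "v \<noteq> pi w"
      proof
        assume "v = pi w"
        hence "pi v = w" using pipi w by auto
        thus False using w by blast
      qed
      moreover have "w \<notin> A" using w BnA by blast
      moreover have "w \<noteq> v" using w by blast
      ultimately show "Mf w v = 1" using False unfolding Mf_def by simp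
    qed simp
    also have "\<dots> = m - 2"
    proof -
      have "pi v \<in> B - {v}" using pv by auto
      hence c1: "card (B - {v}) > 0" using finB card_gt_0_iff by blast
      have c0: "card B > 0" using vB finB card_gt_0_iff by blast
      have "real (card (B - {v} - {pi v})) = real (card (B - {v})) - 1"
        using c1 \<open>pi v \<in> B - {v}\<close> finB by (simp add: card_Diff_singleton of_nat_diff)
      also have "real (card (B - {v})) = real (card B) - 1"
        using c0 vB finB by (simp add: card_Diff_singleton of_nat_diff)
      finally show ?thesis using cardB by simp
    qed
    also have "Mf v v = 2*m - 2" using False unfolding Mf_def by simp
    also have "Mf (pi v) v = 2" using pv ppv False unfolding Mf_def by simp
    finally show ?thesis using False by simp
  qed
qed

definition SA :: "('a \<Rightarrow> real) \<Rightarrow> real" where "SA g = (\<Sum>w\<in>A. g w)"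
definition SB :: "('a \<Rightarrow> real) \<Rightarrow> real" where "SB g = (\<Sum>w\<in>B. g w)"

lemma T_sum:
  assumes u: "u \<in> V"
  shows "(\<Sum>w\<in>V. Tf u w * g w) = (if u = a0 then t * SA g + SB g else if u = b0 then SB g
    else if u \<in> A then g u else if u = pi b0 then (g b0 - g (pi b0)) / 2 - SB g / 2
    else if u \<in> B1 then (g u + g (pi u)) / 2 else (g (pi u) - g u) / 2)"
proof -
  have puV: "u \<in> B \<Longrightarrow> pi u \<in> V" using piB Vdef by auto
  consider "u = a0" | "u \<noteq> a0" "u = b0" | "u \<noteq> a0" "u \<noteq> b0" "u \<in> A"
    | "u \<noteq> a0" "u \<noteq> b0" "u \<notin> A" "u = pi b0" | "u \<noteq> a0" "u \<noteq> b0" "u \<notin> A" "u \<noteq> pi b0" "u \<in> B1"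
    | "u \<noteq> a0" "u \<noteq> b0" "u \<notin> A" "u \<noteq> pi b0" "u \<notin> B1" by blast
  then show ?thesis
  proof cases
    case 1
    have "(\<Sum>w\<in>V. Tf u w * g w) = (\<Sum>w\<in>V. t * (ind A w * g w) + ind B w * g w)"
      by (rule sum.cong) (simp_all add: facts Tf_def 1 distrib_right)
    also have "\<dots> = t * SA g + SB g" using AV BV
      by (simp add: sum.distrib sum_distrib_left[symmetric] sum_ind SA_def SB_def)
    finally show ?thesis using 1 by simp
  next
    case 2
    have "(\<Sum>w\<in>V. Tf u w * g w) = (\<Sum>w\<in>V. ind B w * g w)"
      by (rule sum.cong) (simp_all add: facts Tf_def 2)
    also have "\<dots> = SB g" using BV by (simp add: sum_ind SB_def)
    finally show ?thesis using 2 by simp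
  next
    case 3
    have "(\<Sum>w\<in>V. Tf u w * g w) = (\<Sum>w\<in>V. del u w * g w)"
      by (rule sum.cong) (simp_all add: facts Tf_def 3)
    also have "\<dots> = g u" using u by (simp add: sum_del)
    finally show ?thesis using 3 by simp
  next
    case 4
    have "(\<Sum>w\<in>V. Tf u w * g w) = (\<Sum>w\<in>V. (del b0 w * g w - del (pi b0) w * g w) / 2 - ind B w * g w / 2)"
      by (rule sum.cong) (simp_all add: facts Tf_def 4 left_diff_distrib distrib_right)
    also have "\<dots> = (g b0 - g (pi b0)) / 2 - SB g / 2" using BV facts
      by (simp add: sum_subtractf sum_divide_distrib[symmetric] sum_ind SB_def sum_del)
    finally show ?thesis using 4 by simp
  next
    case 5
    have "(\<Sum>w\<in>V. Tf u w * g w) = (\<Sum>w\<in>V. (del u w * g w + del (pi u) w * g w) / 2)"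
      by (rule sum.cong) (simp_all add: facts Tf_def 5 left_diff_distrib distrib_right)
    also have "\<dots> = (g u + g (pi u)) / 2" using u puV 5
      by (simp add: sum.distrib sum_divide_distrib[symmetric] sum_del)
    finally show ?thesis using 5 by simp
  next
    case 6
    have uB: "u \<in> B" using u 6 Vdef by auto
    have "(\<Sum>w\<in>V. Tf u w * g w) = (\<Sum>w\<in>V. (del (pi u) w * g w - del u w * g w) / 2)"
      by (rule sum.cong) (simp_all add: facts Tf_def 6 left_diff_distrib distrib_right)
    also have "\<dots> = (g (pi u) - g u) / 2" using u puV[OF uB]
      by (simp add: sum_subtractf sum_divide_distrib[symmetric] sum_del)
    finally show ?thesis using 6 by simp
  qed
qed

lemma R_zero: "w \<noteq> a0 \<Longrightarrow> w \<noteq> b0 \<Longrightarrow> w \<noteq> u \<Longrightarrow> Rf u w = 0"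
  unfolding Rf_def by (simp; metis)

lemma R_sum:
  assumes u: "u \<in> V"
  shows "(\<Sum>w\<in>V. Rf u w * g w) = Rf u a0 * g a0 + Rf u b0 * g b0 + (if u = a0 \<or> u = b0 then 0 else Rf u u * g u)"
proof -
  have sub: "{a0, b0, u} \<subseteq> V" using u facts by auto
  have "(\<Sum>w\<in>V. Rf u w * g w) = (\<Sum>w\<in>{a0, b0, u}. Rf u w * g w)"
  proof (rule sum.mono_neutral_right[OF finV sub], rule ballI)
    fix i assume "i \<in> V - {a0, b0, u}"
    hence "i \<noteq> a0" "i \<noteq> b0" "i \<noteq> u" by auto
    thus "Rf u i * g i = 0" by (simp add: R_zero)
  qed
  also have "\<dots> = Rf u a0 * g a0 + Rf u b0 * g b0 + (if u = a0 \<or> u = b0 then 0 else Rf u u * g u)"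
  proof (cases "u = a0 \<or> u = b0")
    case True
    hence e: "{a0, b0, u} = {a0, b0}" by auto
    have "(\<Sum>w\<in>{a0, b0}. Rf u w * g w) = Rf u a0 * g a0 + Rf u b0 * g b0"
      using facts(1) by (simp add: sum.insert)
    thus ?thesis unfolding e using True by simp
  next
    case False
    hence "u \<notin> {a0, b0}" "a0 \<notin> {b0, u}" "b0 \<notin> {u}" using facts(1) by auto
    hence "(\<Sum>w\<in>{a0, b0, u}. Rf u w * g w) = Rf u a0 * g a0 + (Rf u b0 * g b0 + Rf u u * g u)"
      by (simp add: sum.insert)
    thus ?thesis using False by simp
  qed
  finally show ?thesis .
qed

end

context qdg begin

lemma S_sum:
  assumes X: "finite X"
  shows "(\<Sum>w\<in>X. Sf w v) = (if v = a0 then ind X a0 / t else if v = b0 then ind X b0 - ind X a0 / t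
    else if v \<in> A then ind X v - ind X a0
    else if v \<in> B1 then ind X v + ind X (pi v) - ind X b0 - ind X (pi b0)
    else ind X (pi v) - ind X v)"
proof -
  consider "v = a0" | "v \<noteq> a0" "v = b0" | "v \<noteq> a0" "v \<noteq> b0" "v \<in> A"
    | "v \<noteq> a0" "v \<noteq> b0" "v \<notin> A" "v \<in> B1" | "v \<noteq> a0" "v \<noteq> b0" "v \<notin> A" "v \<notin> B1" by blast
  then show ?thesis
  proof cases
    case 1
    have "(\<Sum>w\<in>X. Sf w v) = (\<Sum>w\<in>X. del a0 w / t)"
      by (rule sum.cong) (simp_all add: Sf_def 1)
    thus ?thesis using X 1 by (simp add: sum_divide_distrib[symmetric] sum_del_set)
  next
    case 2
    have "(\<Sum>w\<in>X. Sf w v) = (\<Sum>w\<in>X. del b0 w - del a0 w / t)"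
      by (rule sum.cong) (simp_all add: Sf_def 2 facts)
    thus ?thesis using X 2 by (simp add: sum_subtractf sum_divide_distrib[symmetric] sum_del_set)
  next
    case 3
    have "(\<Sum>w\<in>X. Sf w v) = (\<Sum>w\<in>X. del v w - del a0 w)"
      by (rule sum.cong) (simp_all add: Sf_def 3)
    thus ?thesis using X 3 by (simp add: sum_subtractf sum_del_set)
  next
    case 4
    have "(\<Sum>w\<in>X. Sf w v) = (\<Sum>w\<in>X. del v w + del (pi v) w - del b0 w - del (pi b0) w)"
      by (rule sum.cong) (simp_all add: Sf_def 4)
    thus ?thesis using X 4 by (simp add: sum_subtractf sum.distrib sum_del_set)
  next
    case 5
    have "(\<Sum>w\<in>X. Sf w v) = (\<Sum>w\<in>X. del (pi v) w - del v w)"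
      by (rule sum.cong) (simp_all add: Sf_def 5)
    thus ?thesis using X 5 by (simp add: sum_subtractf sum_del_set)
  qed
qed

end

context qdg begin

lemma memb:
  "u \<in> B1 \<Longrightarrow> u \<notin> A" "u \<in> B2 \<Longrightarrow> u \<notin> A" "u \<in> B1 \<Longrightarrow> u \<notin> B2" "u \<in> B2 \<Longrightarrow> u \<notin> B1"
  "u \<in> B1 \<Longrightarrow> pi u \<in> B2" "u \<in> B2 \<Longrightarrow> pi u \<in> B1"
  "u \<in> B1 \<Longrightarrow> pi (pi u) = u" "u \<in> B2 \<Longrightarrow> pi (pi u) = u"
  subgoal using dAB1 by blast
  subgoal using dAB2 by blast
  subgoal using dB by blast
  subgoal using dB by blast
  subgoal by (rule pi1)
  subgoal by (rule pi2)
  subgoal by (rule pipi) simp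
  subgoal by (rule pipi) simp
  done

lemma neqs:
  "x \<in> A \<Longrightarrow> y \<in> B1 \<Longrightarrow> (x = y) = False" "x \<in> A \<Longrightarrow> y \<in> B1 \<Longrightarrow> (y = x) = False"
  "x \<in> A \<Longrightarrow> y \<in> B2 \<Longrightarrow> (x = y) = False" "x \<in> A \<Longrightarrow> y \<in> B2 \<Longrightarrow> (y = x) = False"
  "x \<in> B1 \<Longrightarrow> y \<in> B2 \<Longrightarrow> (x = y) = False" "x \<in> B1 \<Longrightarrow> y \<in> B2 \<Longrightarrow> (y = x) = False"
  subgoal using dAB1 by blast
  subgoal using dAB1 by blast
  subgoal using dAB2 by blast
  subgoal using dAB2 by blast
  subgoal using dB by blast
  subgoal using dB by blast
  done

lemma pi_inj1: "u \<in> B1 \<Longrightarrow> v \<in> B1 \<Longrightarrow> (pi u = pi v) = (u = v)"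
  and pi_inj2: "u \<in> B2 \<Longrightarrow> v \<in> B2 \<Longrightarrow> (pi u = pi v) = (u = v)"
  using memb(7,8) by metis+

lemma ppb0: "pi (pi b0) = b0" using memb(7) b0 by blast

lemma pi_b0: "u \<in> B2 \<Longrightarrow> (pi u = b0) = (u = pi b0)" "u \<in> B2 \<Longrightarrow> (b0 = pi u) = (u = pi b0)"
  using memb(8)[of u] ppb0 by auto

lemma Amemb: "u \<in> A \<Longrightarrow> u \<notin> B1" "u \<in> A \<Longrightarrow> u \<notin> B2"
  using dAB1 dAB2 by blast+

lemma pi_swap: "u \<in> B1 \<Longrightarrow> v \<in> B2 \<Longrightarrow> (pi u = v) = (u = pi v)"
  "u \<in> B2 \<Longrightarrow> v \<in> B1 \<Longrightarrow> (pi u = v) = (u = pi v)"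
  subgoal using memb(7)[of u] memb(8)[of v] by auto
  subgoal using memb(8)[of u] memb(7)[of v] by auto
  done

lemma classes:
  assumes "x \<in> V"
  obtains "x = a0" | "x = b0" | "x = pi b0" | "x \<in> A" "x \<noteq> a0" "a0 \<noteq> x" "x \<notin> B1" "x \<notin> B2"
    | "x \<in> B1" "x \<noteq> b0" "b0 \<noteq> x" "x \<notin> A" "x \<notin> B2" "pi x \<in> B2" "pi x \<notin> A" "pi x \<notin> B1" "pi (pi x) = x"
    | "x \<in> B2" "x \<noteq> pi b0" "pi b0 \<noteq> x" "x \<notin> A" "x \<notin> B1" "pi x \<in> B1" "pi x \<notin> A" "pi x \<notin> B2" "pi (pi x) = x"
proof -
  have "x \<in> A \<or> x \<in> B1 \<or> x \<in> B2" using assms Vdef by blast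
  then consider "x \<in> A" | "x \<in> B1" | "x \<in> B2" by blast
  thus thesis
  proof cases
    case 1
    thus thesis using that(1,4) Amemb[OF 1] by blast
  next
    case 2
    thus thesis using that(2,5) memb(1,3,5,7)[OF 2] memb(2,4)[OF memb(5)[OF 2]] by blast
  next
    case 3
    thus thesis using that(3,6) memb(2,4,6,8)[OF 3] memb(1,3)[OF memb(6)[OF 3]] by blast
  qed
qed

lemma TS: assumes u: "u \<in> V" and v: "v \<in> V"
  shows "(\<Sum>w\<in>V. Tf u w * Sf w v) = (if u = v then 1 else 0)"
proof -
  have "(\<Sum>w\<in>V. Tf u w * Sf w v) = (if u = a0 then t * SA (\<lambda>w. Sf w v) + SB (\<lambda>w. Sf w v) else if u = b0 then SB (\<lambda>w. Sf w v)
    else if u \<in> A then Sf u v else if u = pi b0 then (Sf b0 v - Sf (pi b0) v) / 2 - SB (\<lambda>w. Sf w v) / 2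
    else if u \<in> B1 then (Sf u v + Sf (pi u) v) / 2 else (Sf (pi u) v - Sf u v) / 2)"
    by (rule T_sum[OF u])
  also have "\<dots> = (if u = v then 1 else 0)"
    unfolding SA_def SB_def S_sum[OF finA] S_sum[OF finB]
    apply (rule classes[OF u]; rule classes[OF v])
    apply (simp_all add: Sf_def del_def ind_def facts a0 b0 t0 neqs pi_inj1 pi_inj2 pi_b0 ppb0)
    apply (metis memb(7,8))+
    done
  finally show ?thesis .
qed

lemma teq': "(t * (m - 2) + 6 * real q - 2) * t = t * (10 * real q - 12) + m"
proof -
  have "(t * (m - 2) + 6 * real q - 2) * t - (t * (10 * real q - 12) + m)
      = (2 * real q - 2) * t^2 - (4 * real q - 10) * t - 2 * real q"
    by (simp add: power2_eq_square algebra_simps)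
  thus ?thesis using teq by linarith
qed

lemma TM: assumes u: "u \<in> V" and v: "v \<in> V"
  shows "(\<Sum>w\<in>V. Tf u w * Mf w v) = (\<Sum>w\<in>V. Rf u w * Tf w v)"
proof -
  have "(\<Sum>w\<in>V. Tf u w * Mf w v) = (if u = a0 then t * SA (\<lambda>w. Mf w v) + SB (\<lambda>w. Mf w v) else if u = b0 then SB (\<lambda>w. Mf w v)
    else if u \<in> A then Mf u v else if u = pi b0 then (Mf b0 v - Mf (pi b0) v) / 2 - SB (\<lambda>w. Mf w v) / 2
    else if u \<in> B1 then (Mf u v + Mf (pi u) v) / 2 else (Mf (pi u) v - Mf u v) / 2)"
    by (rule T_sum[OF u])
  also have "\<dots> = Rf u a0 * Tf a0 v + Rf u b0 * Tf b0 v + (if u = a0 \<or> u = b0 then 0 else Rf u u * Tf u v)"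
    unfolding SA_def SB_def colA[OF v] colB[OF v]
    apply (rule classes[OF u]; rule classes[OF v])
    apply (simp_all add: Mf_def Rf_def Tf_def del_def ind_def facts a0 b0 t0 neqs pi_inj1 pi_inj2 pi_b0 ppb0)
    apply (use teq' in simp)
    apply (use teq' in simp)
    apply (simp_all add: field_simps)
    done
  also have "\<dots> = (\<Sum>w\<in>V. Rf u w * Tf w v)" by (rule R_sum[OF u, symmetric])
  finally show ?thesis .
qed

end

context qdg begin

lemma Rdiag: "u \<in> V \<Longrightarrow> Rf u u = (if u = a0 then t * (m - 2) + 3*m - 2 else if u = b0 then 3*m - 2 - m / t
   else if u \<in> A then 3*m - 8 else if u \<in> B1 then 2*m - 2 else 2*m - 4)"
  by (rule classes; simp add: Rf_def facts)

lemma prod_diag: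
  "(\<Prod>u\<in>V. [:- Rf u u, 1:]) = [:-(t*(m-2)+3*m-2),1:] * [:-(3*m-2-m/t),1:] * [:-(3*m-8),1:]^(2*q-3)
     * [:-(2*m-2),1:]^(q-1) * [:-(2*m-4),1:]^q"
proof -
  let ?f = "\<lambda>u. [:- Rf u u, 1:]"
  have V: "V = insert a0 (insert b0 ((A - {a0}) \<union> ((B1 - {b0}) \<union> B2)))" using Vdef a0 b0 by auto
  have fA': "finite (A - {a0})" and fB1': "finite (B1 - {b0})" using finA finB1 by auto
  have "(\<Prod>u\<in>V. ?f u) = ?f a0 * (?f b0 * ((\<Prod>u\<in>A - {a0}. ?f u) * ((\<Prod>u\<in>B1 - {b0}. ?f u) * (\<Prod>u\<in>B2. ?f u))))"
    unfolding V using finA finB1 finB2 facts a0 b0 dAB1 dAB2 dB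
    by (simp add: prod.union_disjoint Int_Un_distrib Int_Un_distrib2 Diff_Int_distrib2 disjoint_iff) 
  also have "?f a0 = [:-(t*(m-2)+3*m-2),1:]" using Rdiag[OF facts(11)] by simp
  also have "?f b0 = [:-(3*m-2-m/t),1:]" using Rdiag[OF facts(12)] facts by simp
  also have "(\<Prod>u\<in>A - {a0}. ?f u) = (\<Prod>u\<in>A - {a0}. [:-(3*m-8),1:])"
    by (rule prod.cong) (use Rdiag AV facts in auto)
  also have "\<dots> = [:-(3*m-8),1:]^(2*q-3)" using cA a0 finA by (simp add: card_Diff_singleton)
  also have "(\<Prod>u\<in>B1 - {b0}. ?f u) = (\<Prod>u\<in>B1 - {b0}. [:-(2*m-2),1:])"
  proof (rule prod.cong)
    fix u assume u: "u \<in> B1 - {b0}"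
    hence "u \<notin> A" using memb(1) by auto
    hence "u \<noteq> a0" using a0 by auto
    thus "?f u = [:-(2*m-2),1:]" using Rdiag[of u] u B1V \<open>u \<notin> A\<close> by auto
  qed simp
  also have "\<dots> = [:-(2*m-2),1:]^(q-1)" using cB1 b0 finB1 by (simp add: card_Diff_singleton)
  also have "(\<Prod>u\<in>B2. ?f u) = (\<Prod>u\<in>B2. [:-(2*m-4),1:])"
  proof (rule prod.cong)
    fix u assume u: "u \<in> B2"
    hence "u \<noteq> a0" "u \<notin> A" "u \<noteq> b0" "u \<notin> B1" using memb(2,4) facts by auto
    thus "?f u = [:-(2*m-4),1:]" using Rdiag[of u] u B2V by auto
  qed simp
  also have "\<dots> = [:-(2*m-4),1:]^q" using cB2 by simp
  finally show ?thesis by (simp only: mult.assoc)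
qed

theorem main_abstract:
  fixes dn :: "'a \<Rightarrow> 'a \<Rightarrow> nat" and vs :: "'a list"
  assumes vs: "distinct vs" "set vs = V"
    and dn: "\<And>u v. u \<in> V \<Longrightarrow> v \<in> V \<Longrightarrow> dn u v = (if u = v then 0 else if u \<in> A \<and> v \<in> A then 2
        else if u \<in> A \<or> v \<in> A then 1 else if v = pi u then 2 else 1)"
  shows "char_poly (mat (length vs) (length vs) (\<lambda>(i, j). (if i = j then real (\<Sum>u\<in>V. dn u (vs ! i)) else 0)
             + real (dn (vs ! i) (vs ! j)))) =
     [:-(t*(m-2)+3*m-2),1:] * [:-(3*m-2-m/t),1:] * [:-(3*m-8),1:]^(2*q-3)
     * [:-(2*m-2),1:]^(q-1) * [:-(2*m-4),1:]^q"
proof -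
  have dnM: "real (dn u v) = (if u = v then 0 else Mf u v)" if "u \<in> V" "v \<in> V" for u v
    using dn[OF that] by (simp add: Mf_def)
  have tr: "real (\<Sum>w\<in>V. dn w u) = Mf u u" if u: "u \<in> V" for u
  proof -
    have "real (\<Sum>w\<in>V. dn w u) = (\<Sum>w\<in>V. (if w = u then 0 else Mf w u))"
      by (simp add: dnM u)
    also have "\<dots> = (\<Sum>w\<in>V. Mf w u) - Mf u u"
    proof -
      have "(\<Sum>w\<in>V. Mf w u) = Mf u u + (\<Sum>w\<in>V - {u}. Mf w u)" using u finV by (simp add: sum.remove)
      moreover have "(\<Sum>w\<in>V. (if w = u then 0 else Mf w u)) = (\<Sum>w\<in>V - {u}. Mf w u)"
        using finV by (simp add: sum.If_cases Diff_eq Int_commute)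
      ultimately show ?thesis by simp
    qed
    also have "(\<Sum>w\<in>V. Mf w u) = (\<Sum>w\<in>A. Mf w u) + (\<Sum>w\<in>B. Mf w u)"
      unfolding Vdef using finA finB dAB1 dAB2 by (simp add: sum.union_disjoint Un_assoc Int_Un_distrib)
    also have "\<dots> - Mf u u = Mf u u"
      unfolding colA[OF u] colB[OF u] using u Vdef by (auto simp: Mf_def)
    finally show ?thesis .
  qed
  have Mat: "mat (length vs) (length vs) (\<lambda>(i, j). (if i = j then real (\<Sum>u\<in>V. dn u (vs ! i)) else 0)
             + real (dn (vs ! i) (vs ! j))) = matf vs vs Mf"
  proof (rule eq_matI)
    fix i j assume i: "i < dim_row (matf vs vs Mf)" and j: "j < dim_col (matf vs vs Mf)"
    hence i': "i < length vs" and j': "j < length vs" by auto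
    have iV: "vs!i \<in> V" and jV: "vs!j \<in> V" using i' j' vs by auto
    have ij: "(i = j) = (vs!i = vs!j)" using vs(1) i' j' by (simp add: nth_eq_iff_index_eq)
    show "mat (length vs) (length vs) (\<lambda>(i, j). (if i = j then real (\<Sum>u\<in>V. dn u (vs ! i)) else 0)
             + real (dn (vs ! i) (vs ! j))) $$ (i, j) = matf vs vs Mf $$ (i, j)"
      using i' j' ij tr[OF iV] dnM[OF iV jV] by auto
  qed auto
  obtain rest where rest: "distinct rest" "set rest = V - {a0, b0}"
    using finite_distinct_list[of "V - {a0, b0}"] finV by auto
  define ws where "ws = a0 # b0 # rest"
  have ws: "distinct ws" "set ws = V" unfolding ws_def using rest facts by auto
  have "char_poly (matf vs vs Mf) = char_poly (matf ws ws Rf)"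
    by (rule similar_from_vertex[OF vs ws TS TM])
  also have "\<dots> = (\<Prod>u\<in>V. [:- Rf u u, 1:])"
  proof (rule char_poly_lower[OF ws ws_def])
    fix u v assume "u \<in> V" "v \<in> V" "u \<noteq> v" "v \<noteq> a0" "v = b0 \<longrightarrow> u = a0"
    thus "Rf u v = 0" unfolding Rf_def by auto
  qed
  finally show ?thesis unfolding Mat prod_diag .
qed

end


lemma NT_core:
  fixes i j :: nat and r :: nat
  assumes r: "r \<ge> 2"
  shows "((i + j * (2^r - 1)) mod (2 * 2^r) = (j + i * (2^r - 1)) mod (2 * 2^r))
     \<longleftrightarrow> i mod 2^r = j mod 2^r"
proof -
  define q :: nat where "q = 2^r"
  define q' :: nat where "q' = 2^(r-1)"
  have qq: "q = 2 * q'" unfolding q_def q'_def using r by (cases r) auto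
  have q'ev: "even q'" unfolding q'_def using r by simp
  have q'pos: "q' \<ge> 1" unfolding q'_def by simp
  have q1: "q \<ge> 1" unfolding q_def by simp
  have cop: "coprime (int q) (int q' - 1)"
  proof -
    have "odd (int q' - 1)" using q'ev q'pos by simp
    hence "coprime 2 (int q' - 1)" by simp
    hence "coprime ((2::int) ^ r) (int q' - 1)" by (simp add: coprime_power_left_iff)
    thus ?thesis unfolding q_def by simp
  qed
  have "((i + j * (q - 1)) mod (2 * q) = (j + i * (q - 1)) mod (2 * q))
      \<longleftrightarrow> (int (i + j * (q - 1)) mod (2 * int q) = int (j + i * (q - 1)) mod (2 * int q))"
  proof -
    have e1: "int ((i + j * (q - 1)) mod (2 * q)) = int (i + j * (q - 1)) mod (2 * int q)"
      by (simp only: of_nat_mod of_nat_mult of_nat_numeral)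
    have e2: "int ((j + i * (q - 1)) mod (2 * q)) = int (j + i * (q - 1)) mod (2 * int q)"
      by (simp only: of_nat_mod of_nat_mult of_nat_numeral)
    show ?thesis unfolding e1[symmetric] e2[symmetric] by (rule of_nat_eq_iff[symmetric])
  qed
  also have "int (i + j * (q - 1)) = int i + int j * (int q - 1)" using q1 by (simp add: of_nat_diff)
  also have "int (j + i * (q - 1)) = int j + int i * (int q - 1)" using q1 by (simp add: of_nat_diff)
  also have "(int i + int j * (int q - 1)) mod (2 * int q) = (int j + int i * (int q - 1)) mod (2 * int q)
      \<longleftrightarrow> (2 * int q) dvd ((int j - int i) * (int q - 2))"
    by (simp add: mod_eq_dvd_iff algebra_simps)
  also have "(int j - int i) * (int q - 2) = 2 * ((int j - int i) * (int q' - 1))"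
    using qq by (simp add: algebra_simps)
  also have "(2 * int q) dvd (2 * ((int j - int i) * (int q' - 1))) \<longleftrightarrow> int q dvd ((int j - int i) * (int q' - 1))"
    by simp
  also have "\<dots> \<longleftrightarrow> int q dvd (int j - int i)"
    using cop by (simp add: coprime_dvd_mult_left_iff)
  also have "\<dots> \<longleftrightarrow> int i mod int q = int j mod int q"
    by (simp add: mod_eq_dvd_iff dvd_diff_commute)
  also have "\<dots> \<longleftrightarrow> i mod q = j mod q"
    unfolding of_nat_mod[symmetric] by (rule of_nat_eq_iff)
  finally show ?thesis unfolding q_def .
qed

lemma NT_core01:
  fixes i j :: nat and r :: nat
  assumes r: "r \<ge> 2"
  shows "((i + j) mod (2 * 2^r) = (j + i * (2^r - 1)) mod (2 * 2^r)) \<longleftrightarrow> i mod 2^r = 0"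
proof -
  define q :: nat where "q = 2^r"
  define q' :: nat where "q' = 2^(r-1)"
  have qq: "q = 2 * q'" unfolding q_def q'_def using r by (cases r) auto
  have q'ev: "even q'" unfolding q'_def using r by simp
  have q'pos: "q' \<ge> 1" unfolding q'_def by simp
  have q1: "q \<ge> 1" unfolding q_def by simp
  have cop: "coprime (int q) (int q' - 1)"
  proof -
    have "odd (int q' - 1)" using q'ev q'pos by simp
    hence "coprime 2 (int q' - 1)" by simp
    hence "coprime ((2::int) ^ r) (int q' - 1)" by (simp add: coprime_power_left_iff)
    thus ?thesis unfolding q_def by simp
  qed
  have "((i + j) mod (2 * q) = (j + i * (q - 1)) mod (2 * q))
      \<longleftrightarrow> (int (i + j) mod (2 * int q) = int (j + i * (q - 1)) mod (2 * int q))"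
  proof -
    have e1: "int ((i + j) mod (2 * q)) = int (i + j) mod (2 * int q)"
      by (simp only: of_nat_mod of_nat_mult of_nat_numeral)
    have e2: "int ((j + i * (q - 1)) mod (2 * q)) = int (j + i * (q - 1)) mod (2 * int q)"
      by (simp only: of_nat_mod of_nat_mult of_nat_numeral)
    show ?thesis unfolding e1[symmetric] e2[symmetric] by (rule of_nat_eq_iff[symmetric])
  qed
  also have "int (i + j) = int i + int j" by simp
  also have "int (j + i * (q - 1)) = int j + int i * (int q - 1)" using q1 by (simp add: of_nat_diff)
  also have "(int i + int j) mod (2 * int q) = (int j + int i * (int q - 1)) mod (2 * int q)
      \<longleftrightarrow> (2 * int q) dvd (int i * (2 - int q))"
    by (simp add: mod_eq_dvd_iff algebra_simps)
  also have "int i * (2 - int q) = - (2 * (int i * (int q' - 1)))"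
    using qq by (simp add: algebra_simps)
  also have "(2 * int q) dvd (- (2 * (int i * (int q' - 1)))) \<longleftrightarrow> int q dvd (int i * (int q' - 1))"
    by simp
  also have "\<dots> \<longleftrightarrow> int q dvd int i"
    using cop by (simp add: coprime_dvd_mult_left_iff)
  also have "\<dots> \<longleftrightarrow> i mod q = 0"
    by (simp flip: of_nat_mod add: dvd_eq_mod_eq_0)
  finally show ?thesis unfolding q_def .
qed


locale qdgrp = group G for G :: "('a, 'b) monoid_scheme" (structure) +
  fixes a b :: 'a and n :: nat
  assumes n4: "n \<ge> 4" and fin: "finite (carrier G)" and ord: "card (carrier G) = 2 ^ n"
    and ab: "a \<in> carrier G" "b \<in> carrier G" and gen: "generate G {a, b} = carrier G"
    and rel_a: "a [^] (2 ^ (n - 1) :: nat) = \<one>" and rel_b: "b [^] (2::nat) = \<one>"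
    and rel_ba: "b \<otimes> a \<otimes> inv b = a [^] (2 ^ (n - 2) - 1 :: nat)"
begin

definition "qq = (2::nat) ^ (n - 2)"
definition "kk = qq - 1"
definition "mm = 2 * qq"

lemma aC[simp]: "a \<in> carrier G" and bC[simp]: "b \<in> carrier G" using ab by auto

lemma mm_eq: "(2::nat) ^ (n - 1) = mm"
proof -
  have "n - 1 = Suc (n - 2)" using n4 by simp
  thus ?thesis unfolding mm_def qq_def by simp
qed

lemma two_n: "(2::nat) ^ n = 2 * mm"
proof -
  have "n = Suc (n - 1)" using n4 by simp
  hence "(2::nat) ^ n = 2 * 2 ^ (n - 1)" by (metis power_Suc)
  thus ?thesis using mm_eq by simp
qed

lemma qq4: "qq \<ge> 4"
proof -
  have "(2::nat) ^ 2 \<le> 2 ^ (n - 2)" using n4 by (intro power_increasing) auto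
  thus ?thesis unfolding qq_def by simp
qed

lemma a_mm: "a [^] mm = \<one>" using rel_a mm_eq by simp

lemma apow_mod: "a [^] (i::nat) = a [^] (i mod mm)"
proof -
  have "a [^] i = a [^] (mm * (i div mm) + i mod mm)" by simp
  also have "\<dots> = (a [^] mm) [^] (i div mm) \<otimes> a [^] (i mod mm)"
    by (simp add: nat_pow_mult nat_pow_pow)
  also have "\<dots> = a [^] (i mod mm)" by (simp add: a_mm)
  finally show ?thesis .
qed

lemma bb: "b \<otimes> b = \<one>"
  using rel_b by (simp add: numeral_2_eq_2)

lemma invb: "inv b = b" by (rule inv_equality) (use bb in auto)

lemma ba: "b \<otimes> a = a [^] kk \<otimes> b"
proof -
  have "b \<otimes> a = b \<otimes> a \<otimes> inv b \<otimes> b" by (simp add: m_assoc)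
  also have "\<dots> = a [^] kk \<otimes> b" using rel_ba unfolding kk_def qq_def by simp
  finally show ?thesis .
qed

lemma baj: "b \<otimes> a [^] (j::nat) = a [^] (j * kk) \<otimes> b"
proof (induction j)
  case 0 thus ?case by simp
next
  case (Suc j)
  have "b \<otimes> a [^] Suc j = (b \<otimes> a [^] j) \<otimes> a" by (simp add: m_assoc)
  also have "\<dots> = a [^] (j * kk) \<otimes> (b \<otimes> a)" using Suc by (simp add: m_assoc)
  also have "\<dots> = a [^] (j * kk) \<otimes> a [^] kk \<otimes> b" by (simp add: ba m_assoc)
  also have "\<dots> = a [^] (Suc j * kk) \<otimes> b" by (simp add: nat_pow_mult add.commute)
  finally show ?case .
qed

lemma bea: "b [^] (e::nat) \<otimes> a [^] (j::nat) = a [^] (j * kk ^ e) \<otimes> b [^] e"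
proof (induction e arbitrary: j)
  case 0 thus ?case by simp
next
  case (Suc e)
  have "b [^] Suc e \<otimes> a [^] j = b [^] e \<otimes> (b \<otimes> a [^] j)" by (simp add: m_assoc)
  also have "\<dots> = b [^] e \<otimes> a [^] (j * kk) \<otimes> b" by (simp add: baj m_assoc)
  also have "\<dots> = a [^] (j * kk * kk ^ e) \<otimes> b [^] e \<otimes> b" using Suc by simp
  also have "\<dots> = a [^] (j * kk ^ Suc e) \<otimes> b [^] Suc e" by (simp add: m_assoc mult.assoc mult.commute)
  finally show ?case .
qed

lemma bpow_mod: "b [^] (e::nat) = b [^] (e mod 2)"
proof -
  have b2: "b [^] (2::nat) = \<one>" by (rule rel_b)
  have "b [^] e = b [^] (2 * (e div 2) + e mod 2)" by simp
  also have "\<dots> = (b [^] (2::nat)) [^] (e div 2) \<otimes> b [^] (e mod 2)"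
    by (simp only: nat_pow_mult[symmetric] nat_pow_pow bC)
  also have "\<dots> = b [^] (e mod 2)" by (simp add: b2)
  finally show ?thesis .
qed

definition f :: "nat \<Rightarrow> nat \<Rightarrow> 'a" where "f i e = a [^] i \<otimes> b [^] e"

lemma f_closed[simp]: "f i e \<in> carrier G" by (simp add: f_def)

lemma f_mult: "f i e \<otimes> f j e' = f (i + j * kk ^ e) (e + e')"
proof -
  have "f i e \<otimes> f j e' = a [^] i \<otimes> (b [^] e \<otimes> a [^] j) \<otimes> b [^] e'" by (simp add: f_def m_assoc)
  also have "\<dots> = a [^] i \<otimes> a [^] (j * kk ^ e) \<otimes> (b [^] e \<otimes> b [^] e')" by (simp add: bea m_assoc)
  also have "\<dots> = f (i + j * kk ^ e) (e + e')" by (simp add: f_def nat_pow_mult)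
  finally show ?thesis .
qed

lemma f_mod: "f i e = f (i mod mm) (e mod 2)"
  unfolding f_def by (metis apow_mod bpow_mod)

definition "D = {..<mm} \<times> {..<(2::nat)}"
definition "S = (\<lambda>(i, e). f i e) ` D"

lemma mm_pos: "mm > 0" using qq4 unfolding mm_def by simp

lemma f_in_S: "f i e \<in> S"
proof -
  have "(i mod mm, e mod 2) \<in> D" unfolding D_def using mm_pos by simp
  thus ?thesis unfolding S_def using f_mod[of i e] by force
qed

lemma gen_S: "generate G {a, b} \<subseteq> S"
proof
  fix x assume "x \<in> generate G {a, b}"
  thus "x \<in> S"
  proof (induction rule: generate.induct)
    case one
    have "\<one> = f 0 0" by (simp add: f_def)
    thus ?case using f_in_S by simp
  next
    case (incl h)
    have ab': "a = f 1 0" "b = f 0 1" by (simp_all add: f_def)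
    from incl have "h = a \<or> h = b" by auto
    thus ?case using ab' f_in_S by metis
  next
    case (inv h)
    have "a [^] (mm - 1) \<otimes> a = \<one>"
    proof -
      have "a [^] (mm - 1) \<otimes> a = a [^] Suc (mm - 1)" by simp
      also have "Suc (mm - 1) = mm" using mm_pos by simp
      finally show ?thesis using a_mm by simp
    qed
    hence "inv a = f (mm - 1) 0" by (simp add: f_def inv_equality)
    moreover have "inv b = f 0 1" by (simp add: f_def invb)
    ultimately show ?case using inv f_in_S by auto
  next
    case (eng h1 h2)
    then obtain i e j e' where "h1 = f i e" "h2 = f j e'" unfolding S_def by auto
    thus ?case using f_mult f_in_S by simp
  qed
qed

lemma carrier_S: "carrier G = S"
proof
  show "carrier G \<subseteq> S" using gen gen_S by simp
  show "S \<subseteq> carrier G" unfolding S_def by auto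
qed

lemma inj_f: "inj_on (\<lambda>(i, e). f i e) D"
proof (rule eq_card_imp_inj_on)
  show "finite D" unfolding D_def by simp
  have "card D = 2 * mm" unfolding D_def by (simp add: card_cartesian_product)
  moreover have "card ((\<lambda>(i, e). f i e) ` D) = 2 * mm" using carrier_S ord two_n unfolding S_def by simp
  ultimately show "card ((\<lambda>(i, e). f i e) ` D) = card D" by simp
qed

lemma f_eq: "f i e = f j e' \<longleftrightarrow> i mod mm = j mod mm \<and> e mod 2 = e' mod 2"
proof
  assume "f i e = f j e'"
  hence "f (i mod mm) (e mod 2) = f (j mod mm) (e' mod 2)" using f_mod by metis
  moreover have "(i mod mm, e mod 2) \<in> D" "(j mod mm, e' mod 2) \<in> D" unfolding D_def using mm_pos by auto
  ultimately show "i mod mm = j mod mm \<and> e mod 2 = e' mod 2" using inj_f unfolding inj_on_def by auto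
next
  assume "i mod mm = j mod mm \<and> e mod 2 = e' mod 2"
  thus "f i e = f j e'" using f_mod by metis
qed

end


context qdgrp begin

lemma r2: "n - 2 \<ge> 2" using n4 by simp
lemma qq_eq: "qq = 2 ^ (n - 2)" and mm_eq2: "mm = 2 * 2 ^ (n - 2)" and kk_eq: "kk = 2 ^ (n - 2) - 1"
  unfolding qq_def mm_def kk_def by simp_all

lemma NT11: "(i + j * kk) mod mm = (j + i * kk) mod mm \<longleftrightarrow> i mod qq = j mod qq"
  unfolding qq_eq mm_eq2 kk_eq by (rule NT_core[OF r2])

lemma NT01: "(i + j) mod mm = (j + i * kk) mod mm \<longleftrightarrow> i mod qq = 0"
  unfolding qq_eq mm_eq2 kk_eq by (rule NT_core01[OF r2])

lemma comm_iff: "f i e \<otimes> f j e' = f j e' \<otimes> f i e \<longleftrightarrow> (i + j * kk ^ e) mod mm = (j + i * kk ^ e') mod mm"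
  unfolding f_mult f_eq by (simp add: add.commute)

lemma comm00: "f i 0 \<otimes> f j 0 = f j 0 \<otimes> f i 0" unfolding comm_iff by (simp add: add.commute)
lemma comm01: "f i 0 \<otimes> f j 1 = f j 1 \<otimes> f i 0 \<longleftrightarrow> i mod qq = 0" unfolding comm_iff using NT01 by simp
lemma comm10: "f j 1 \<otimes> f i 0 = f i 0 \<otimes> f j 1 \<longleftrightarrow> i mod qq = 0" using comm01 by metis
lemma comm11: "f i 1 \<otimes> f j 1 = f j 1 \<otimes> f i 1 \<longleftrightarrow> i mod qq = j mod qq" unfolding comm_iff using NT11 by simp

lemma elem_cases:
  assumes "x \<in> carrier G"
  obtains i where "i < mm" "x = f i 0" | i where "i < mm" "x = f i 1"
proof -
  from assms obtain i e where ie: "(i, e) \<in> D" "x = f i e" unfolding carrier_S S_def by auto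
  hence "e = 0 \<or> e = 1" unfolding D_def by auto
  thus thesis using ie that unfolding D_def by auto
qed

lemma f_eq_lt: "i < mm \<Longrightarrow> j < mm \<Longrightarrow> f i e = f j e \<longleftrightarrow> i = j"
  by (simp add: f_eq)
lemma f_neq01: "f i 0 \<noteq> f j 1" by (simp add: f_eq)

lemma qq_lt_mm: "qq < mm" and qq_pos: "qq > 0" using qq4 unfolding mm_def by auto

lemma center_eq: "grp_center G = {f i 0 | i. i < mm \<and> i mod qq = 0}"
proof
  show "grp_center G \<subseteq> {f i 0 | i. i < mm \<and> i mod qq = 0}"
  proof
    fix z assume z: "z \<in> grp_center G"
    hence zc: "z \<in> carrier G" and zcomm: "\<And>x. x \<in> carrier G \<Longrightarrow> z \<otimes> x = x \<otimes> z"
      unfolding grp_center_def by auto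
    from zc show "z \<in> {f i 0 | i. i < mm \<and> i mod qq = 0}"
    proof (cases rule: elem_cases)
      case (1 i)
      have "f i 0 \<otimes> f 0 1 = f 0 1 \<otimes> f i 0" using zcomm[of "f 0 1"] 1 by simp
      hence "i mod qq = 0" using comm01 by simp
      thus ?thesis using 1 by auto
    next
      case (2 i)
      have "f i 1 \<otimes> f 1 0 = f 1 0 \<otimes> f i 1" using zcomm[of "f 1 0"] 2 by simp
      hence "1 mod qq = 0" using comm10 by simp
      hence False using qq4 by simp
      thus ?thesis ..
    qed
  qed
  show "{f i 0 | i. i < mm \<and> i mod qq = 0} \<subseteq> grp_center G"
  proof
    fix z assume "z \<in> {f i 0 | i. i < mm \<and> i mod qq = 0}"
    then obtain i where i: "z = f i 0" "i mod qq = 0" by auto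
    have "z \<otimes> x = x \<otimes> z" if x: "x \<in> carrier G" for x
      using x
    proof (cases rule: elem_cases)
      case (1 j) thus ?thesis using i comm00 by simp
    next
      case (2 j) thus ?thesis using i comm01 by simp
    qed
    thus "z \<in> grp_center G" unfolding grp_center_def using i by auto
  qed
qed

definition "Aset = {f i 0 | i. i < mm \<and> i mod qq \<noteq> 0}"
definition "B1set = {f i 1 | i. i < qq}"
definition "B2set = {f i 1 | i. qq \<le> i \<and> i < mm}"
definition "piF x = a [^] qq \<otimes> x"

lemma V_eq: "ncg_verts G = Aset \<union> B1set \<union> B2set"
proof
  show "ncg_verts G \<subseteq> Aset \<union> B1set \<union> B2set"
  proof
    fix x assume x: "x \<in> ncg_verts G"
    hence xc: "x \<in> carrier G" and xn: "x \<notin> grp_center G" unfolding ncg_verts_def by auto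
    from xc show "x \<in> Aset \<union> B1set \<union> B2set"
    proof (cases rule: elem_cases)
      case (1 i)
      have "i mod qq \<noteq> 0" using xn 1 center_eq by auto
      thus ?thesis using 1 unfolding Aset_def by auto
    next
      case (2 i)
      thus ?thesis unfolding B1set_def B2set_def by (cases "i < qq") auto
    qed
  qed
  show "Aset \<union> B1set \<union> B2set \<subseteq> ncg_verts G"
  proof
    fix x assume x: "x \<in> Aset \<union> B1set \<union> B2set"
    have "x \<in> carrier G" using x unfolding Aset_def B1set_def B2set_def by auto
    moreover have "x \<notin> grp_center G"
    proof
      assume "x \<in> grp_center G"
      then obtain j where j: "x = f j 0" "j < mm" "j mod qq = 0" using center_eq by auto
      from x show False
      proof (elim UnE)
        assume "x \<in> Aset"
        then obtain i where "x = f i 0" "i < mm" "i mod qq \<noteq> 0" unfolding Aset_def by auto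
        thus False using j f_eq_lt by metis
      next
        assume "x \<in> B1set" thus False using j f_neq01 unfolding B1set_def by auto
      next
        assume "x \<in> B2set" thus False using j f_neq01 unfolding B2set_def by auto
      qed
    qed
    ultimately show "x \<in> ncg_verts G" unfolding ncg_verts_def by auto
  qed
qed

lemma piF_f: "piF (f i 1) = f (qq + i) 1"
  unfolding piF_def f_def by (simp add: m_assoc[symmetric] nat_pow_mult)

lemma piF_piF: "x \<in> carrier G \<Longrightarrow> piF (piF x) = x"
proof -
  assume x: "x \<in> carrier G"
  have "piF (piF x) = a [^] (qq + qq) \<otimes> x" unfolding piF_def using x by (simp add: m_assoc[symmetric] nat_pow_mult)
  also have "qq + qq = mm" unfolding mm_def by simp
  finally show ?thesis using x a_mm by simp
qed

lemma mod_pair: "i < mm \<Longrightarrow> j < mm \<Longrightarrow> (i mod qq = j mod qq) \<longleftrightarrow> (j = i \<or> j = (qq + i) mod mm)"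
proof -
  assume i: "i < mm" and j: "j < mm"
  have m2: "mm = qq + qq" unfolding mm_def by simp
  show ?thesis
  proof (cases "i < qq"; cases "j < qq")
    assume "i < qq" "j < qq"
    moreover have "(qq + i) mod mm = qq + i" using \<open>i < qq\<close> m2 by simp
    ultimately show ?thesis by auto
  next
    assume "i < qq" "\<not> j < qq"
    moreover have "(qq + i) mod mm = qq + i" using \<open>i < qq\<close> m2 by simp
    moreover have "j mod qq = j - qq" using \<open>\<not> j < qq\<close> j m2 by (simp add: le_mod_geq)
    ultimately show ?thesis using j m2 by auto
  next
    assume "\<not> i < qq" "j < qq"
    moreover have "(qq + i) mod mm = i - qq" using \<open>\<not> i < qq\<close> i m2 by (simp add: le_mod_geq)
    moreover have "i mod qq = i - qq" using \<open>\<not> i < qq\<close> i m2 by (simp add: le_mod_geq)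
    ultimately show ?thesis by auto
  next
    assume "\<not> i < qq" "\<not> j < qq"
    moreover have "(qq + i) mod mm = i - qq" using \<open>\<not> i < qq\<close> i m2 by (simp add: le_mod_geq)
    moreover have "i mod qq = i - qq" using \<open>\<not> i < qq\<close> i m2 by (simp add: le_mod_geq)
    moreover have "j mod qq = j - qq" using \<open>\<not> j < qq\<close> j m2 by (simp add: le_mod_geq)
    ultimately show ?thesis using i j m2 by auto
  qed
qed

end


lemma adj_V: "ncg_adj G u v \<Longrightarrow> u \<in> ncg_verts G \<and> v \<in> ncg_verts G" by (simp add: ncg_adj_def)
lemma adj_neq: "ncg_adj G u v \<Longrightarrow> u \<noteq> v" by (simp add: ncg_adj_def)

lemma walk1: "ncg_walk G (Suc 0) u v \<longleftrightarrow> ncg_adj G u v"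
  by (auto simp: ncg_adj_def)

lemma dist0: "u \<in> ncg_verts G \<Longrightarrow> ncg_dist G u u = 0"
  unfolding ncg_dist_def by (rule Least_equality) auto

lemma dist1: "ncg_adj G u v \<Longrightarrow> ncg_dist G u v = 1"
  unfolding ncg_dist_def
proof (rule Least_equality)
  assume "ncg_adj G u v"
  thus "ncg_walk G 1 u v" using adj_V[of G u v] by auto
next
  fix k assume adj: "ncg_adj G u v" and w: "ncg_walk G k u v"
  show "1 \<le> k"
  proof (rule ccontr)
    assume "\<not> 1 \<le> k"
    hence "k = 0" by simp
    thus False using w adj_neq[OF adj] by simp
  qed
qed

lemma dist2:
  assumes "u \<noteq> v" "\<not> ncg_adj G u v" "ncg_adj G u w" "ncg_adj G w v"
  shows "ncg_dist G u v = 2"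
  unfolding ncg_dist_def
proof (rule Least_equality)
  have "ncg_walk G (Suc 0) w v" using assms(4) adj_V[of G w v] by auto
  hence "ncg_walk G (Suc (Suc 0)) u v" using assms(3) by auto
  thus "ncg_walk G 2 u v" by (simp add: numeral_2_eq_2)
next
  fix k assume w: "ncg_walk G k u v"
  show "2 \<le> k"
  proof (rule ccontr)
    assume "\<not> 2 \<le> k"
    hence "k = 0 \<or> k = Suc 0" by auto
    thus False using w assms(1,2) walk1 by auto
  qed
qed

context qdgrp begin

abbreviation "Bset \<equiv> B1set \<union> B2set"

lemma Bset_eq: "Bset = {f i 1 | i. i < mm}"
proof
  show "Bset \<subseteq> {f i 1 | i. i < mm}" unfolding B1set_def B2set_def using qq_lt_mm by auto
  show "{f i 1 | i. i < mm} \<subseteq> Bset"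
  proof
    fix x assume "x \<in> {f i 1 | i. i < mm}"
    then obtain i where i: "x = f i 1" "i < mm" by auto
    show "x \<in> Bset"
    proof (cases "i < qq")
      case True thus ?thesis using i unfolding B1set_def by blast
    next
      case False thus ?thesis using i unfolding B2set_def by auto
    qed
  qed
qed

lemma Vsub: "ncg_verts G \<subseteq> carrier G" unfolding ncg_verts_def by auto

lemma adjAB: assumes x: "x \<in> Aset" and y: "y \<in> Bset"
  shows "ncg_adj G x y" "ncg_adj G y x"
proof -
  obtain i where i: "x = f i 0" "i < mm" "i mod qq \<noteq> 0" using x unfolding Aset_def by auto
  obtain j where j: "y = f j 1" "j < mm" using y Bset_eq by auto
  have xV: "x \<in> ncg_verts G" and yV: "y \<in> ncg_verts G" using x y V_eq by auto
  have ne: "x \<noteq> y" using i j f_neq01 by simp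
  have nc: "x \<otimes> y \<noteq> y \<otimes> x" using i j comm01 by simp
  show "ncg_adj G x y" unfolding ncg_adj_def using xV yV ne nc by simp
  show "ncg_adj G y x" unfolding ncg_adj_def using xV yV ne nc by metis
qed

lemma nadjAA: assumes "x \<in> Aset" "y \<in> Aset" shows "\<not> ncg_adj G x y"
proof -
  obtain i where i: "x = f i 0" using assms unfolding Aset_def by auto
  obtain j where j: "y = f j 0" using assms unfolding Aset_def by auto
  show ?thesis unfolding ncg_adj_def using i j comm00 by simp
qed

lemma adjBB: assumes x: "x \<in> Bset" and y: "y \<in> Bset"
  shows "ncg_adj G x y \<longleftrightarrow> x \<noteq> y \<and> y \<noteq> piF x"
proof -
  obtain i where i: "x = f i 1" "i < mm" using x Bset_eq by auto
  obtain j where j: "y = f j 1" "j < mm" using y Bset_eq by auto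
  have xV: "x \<in> ncg_verts G" and yV: "y \<in> ncg_verts G" using x y V_eq by auto
  have pf: "piF x = f ((qq + i) mod mm) 1" using i piF_f f_mod by (metis mod_mod_trivial)
  have "x \<otimes> y = y \<otimes> x \<longleftrightarrow> i mod qq = j mod qq" using i j comm11 by simp
  also have "\<dots> \<longleftrightarrow> j = i \<or> j = (qq + i) mod mm" by (rule mod_pair[OF i(2) j(2)])
  also have "\<dots> \<longleftrightarrow> y = x \<or> y = piF x" using i j pf mm_pos by (simp add: f_eq_lt)
  finally show ?thesis unfolding ncg_adj_def using xV yV by auto
qed

lemma a_in: "a \<in> Aset"
proof -
  have "a = f 1 0" by (simp add: f_def)
  moreover have "1 < mm" "1 mod qq \<noteq> 0" using qq4 qq_lt_mm by auto
  ultimately show ?thesis unfolding Aset_def by blast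
qed

lemma b_in: "b \<in> B1set"
proof -
  have "b = f 0 1" by (simp add: f_def)
  thus ?thesis unfolding B1set_def using qq_pos by blast
qed

lemma piF_B: "x \<in> Bset \<Longrightarrow> piF x \<noteq> x"
proof -
  assume "x \<in> Bset"
  then obtain i where i: "x = f i 1" "i < mm" using Bset_eq by auto
  have "piF x = f (qq + i) 1" using i piF_f by simp
  moreover have "(qq + i) mod mm \<noteq> i mod mm"
  proof
    assume "(qq + i) mod mm = i mod mm"
    hence "(qq + i) mod mm = i" using i by simp
    thus False using i qq_lt_mm qq_pos unfolding mm_def
      by (cases "qq + i < 2 * qq") (auto simp: le_mod_geq)
  qed
  ultimately show ?thesis using i f_eq by auto
qed

lemma dn_table: assumes u: "u \<in> ncg_verts G" and v: "v \<in> ncg_verts G"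
  shows "ncg_dist G u v = (if u = v then 0 else if u \<in> Aset \<and> v \<in> Aset then 2
        else if u \<in> Aset \<or> v \<in> Aset then 1 else if v = piF u then 2 else 1)"
proof -
  have AB: "x \<in> ncg_verts G \<Longrightarrow> x \<notin> Aset \<Longrightarrow> x \<in> Bset" for x using V_eq by auto
  show ?thesis
  proof (cases "u = v")
    case True thus ?thesis using dist0 u by simp
  next
    case ne: False
    show ?thesis
    proof (cases "u \<in> Aset \<and> v \<in> Aset")
      case True
      have "ncg_dist G u v = 2"
        by (rule dist2[OF ne nadjAA adjAB(1) adjAB(2)]) (use True b_in in auto)
      thus ?thesis using ne True by simp
    next
      case nAA: False
      show ?thesis
      proof (cases "u \<in> Aset \<or> v \<in> Aset")
        case True
        hence adj: "ncg_adj G u v" using nAA adjAB AB u v by blast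
        show ?thesis using dist1[OF adj] ne nAA True by simp
      next
        case False
        hence uB: "u \<in> Bset" and vB: "v \<in> Bset" using AB u v by auto
        show ?thesis
        proof (cases "v = piF u")
          case True
          have "ncg_dist G u v = 2"
            by (rule dist2[OF ne _ adjAB(2)[OF a_in uB] adjAB(1)[OF a_in vB]]) (use adjBB[OF uB vB] True in auto)
          thus ?thesis using ne False True by simp
        next
          case nP: False
          have adj: "ncg_adj G u v" using adjBB[OF uB vB] ne nP by simp
          show ?thesis using dist1[OF adj] ne False nP by simp
        qed
      qed
    qed
  qed
qed

end


context qdgrp begin

lemma disj: "Aset \<inter> B1set = {}" "Aset \<inter> B2set = {}" "B1set \<inter> B2set = {}"
proof -
  show "Aset \<inter> B1set = {}" unfolding Aset_def B1set_def using f_neq01 by auto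
  show "Aset \<inter> B2set = {}" unfolding Aset_def B2set_def using f_neq01 by auto
  show "B1set \<inter> B2set = {}"
  proof (rule ccontr)
    assume "B1set \<inter> B2set \<noteq> {}"
    then obtain i j where "f i 1 = f j 1" "i < qq" "qq \<le> j" "j < mm" unfolding B1set_def B2set_def by blast
    moreover have "i < mm" using \<open>i < qq\<close> qq_lt_mm by simp
    ultimately show False using f_eq_lt by auto
  qed
qed

lemma inj_lt: "inj_on (\<lambda>i. f i e) {..<mm}"
  unfolding inj_on_def using f_eq_lt by auto

lemma card_A: "card Aset = 2 * qq - 2"
proof -
  have idx: "{i. i < mm \<and> i mod qq \<noteq> 0} = {..<mm} - {0, qq}"
  proof -
    have "i mod qq = 0 \<longleftrightarrow> i = 0 \<or> i = qq" if "i < mm" for i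
    proof (cases "i < qq")
      case True thus ?thesis using qq_pos by auto
    next
      case False
      hence "i mod qq = i - qq" using that unfolding mm_def by (simp add: le_mod_geq)
      thus ?thesis using False by auto
    qed
    thus ?thesis by auto
  qed
  have "Aset = (\<lambda>i. f i 0) ` {i. i < mm \<and> i mod qq \<noteq> 0}" unfolding Aset_def by auto
  hence "card Aset = card {i. i < mm \<and> i mod qq \<noteq> 0}"
    using inj_lt[of 0] by (simp add: card_image inj_on_subset[of _ "{..<mm}"] subset_eq)
  also have "\<dots> = mm - 2" unfolding idx using qq_lt_mm qq_pos by (simp add: card_Diff_subset)
  finally show ?thesis unfolding mm_def .
qed

lemma card_B1: "card B1set = qq"
proof -
  have "B1set = (\<lambda>i. f i 1) ` {..<qq}" unfolding B1set_def by auto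
  moreover have "inj_on (\<lambda>i. f i 1) {..<qq}" using inj_lt[of 1] qq_lt_mm by (auto intro: inj_on_subset)
  ultimately show ?thesis by (simp add: card_image)
qed

lemma card_B2: "card B2set = qq"
proof -
  have "B2set = (\<lambda>i. f i 1) ` {qq..<mm}" unfolding B2set_def by auto
  moreover have "inj_on (\<lambda>i. f i 1) {qq..<mm}" using inj_lt[of 1] by (auto intro: inj_on_subset)
  ultimately show ?thesis unfolding mm_def by (simp add: card_image)
qed

lemma pi1': "u \<in> B1set \<Longrightarrow> piF u \<in> B2set"
proof -
  assume "u \<in> B1set"
  then obtain i where i: "u = f i 1" "i < qq" unfolding B1set_def by auto
  have "piF u = f (qq + i) 1" using i piF_f by simp
  thus ?thesis unfolding B2set_def using i mm_def by auto
qed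

lemma pi2': "u \<in> B2set \<Longrightarrow> piF u \<in> B1set"
proof -
  assume "u \<in> B2set"
  then obtain i where i: "u = f i 1" "qq \<le> i" "i < mm" unfolding B2set_def by auto
  have "piF u = f (qq + i) 1" using i piF_f by simp
  also have "\<dots> = f ((qq + i) mod mm) 1" using f_mod by (metis mod_mod_trivial)
  also have "(qq + i) mod mm = i - qq" using i unfolding mm_def by (simp add: le_mod_geq)
  finally show ?thesis unfolding B1set_def using i mm_def by auto
qed

lemma qdg_inst:
  assumes t0: "t \<noteq> 0" and teq: "(2 * real qq - 2) * t^2 - (4 * real qq - 10) * t - 2 * real qq = 0"
  shows "qdg (ncg_verts G) Aset B1set B2set piF a b qq t"
proof
  show "finite (ncg_verts G)" using Vsub fin finite_subset by blast
  show "ncg_verts G = Aset \<union> B1set \<union> B2set" by (rule V_eq)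
  show "Aset \<inter> B1set = {}" "Aset \<inter> B2set = {}" "B1set \<inter> B2set = {}" by (rule disj)+
  show "card Aset = 2 * qq - 2" "card B1set = qq" "card B2set = qq" by (rule card_A, rule card_B1, rule card_B2)
  show "2 \<le> qq" using qq4 by simp
  show "\<And>u. u \<in> B1set \<Longrightarrow> piF u \<in> B2set" by (rule pi1')
  show "\<And>u. u \<in> B2set \<Longrightarrow> piF u \<in> B1set" by (rule pi2')
  show "\<And>u. u \<in> B1set \<union> B2set \<Longrightarrow> piF (piF u) = u"
  proof -
    fix u assume "u \<in> B1set \<union> B2set"
    hence "u \<in> carrier G" using V_eq Vsub by auto
    thus "piF (piF u) = u" by (rule piF_piF)
  qed
  show "a \<in> Aset" by (rule a_in)
  show "b \<in> B1set" by (rule b_in)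
  show "t \<noteq> 0" by (rule t0)
  show "(2 * real qq - 2) * t^2 - (4 * real qq - 10) * t - 2 * real qq = 0" by (rule teq)
qed

end


theorem theorem4p3:
  fixes G :: "('a, 'b) monoid_scheme" and a b :: 'a and n :: nat and t1 t2 :: real
    and vs :: "'a list"
  assumes n4: "n \<ge> 4"
    and grp: "group G"
    and fin: "finite (carrier G)"
    and ord: "card (carrier G) = 2 ^ n"
    and ab: "a \<in> carrier G" "b \<in> carrier G"
    and gen: "generate G {a, b} = carrier G"
    and rel_a: "a [^]\<^bsub>G\<^esub> (2 ^ (n - 1) :: nat) = \<one>\<^bsub>G\<^esub>"
    and rel_b: "b [^]\<^bsub>G\<^esub> (2 :: nat) = \<one>\<^bsub>G\<^esub>"
    and rel_ba: "b \<otimes>\<^bsub>G\<^esub> a \<otimes>\<^bsub>G\<^esub> inv\<^bsub>G\<^esub> b = a [^]\<^bsub>G\<^esub> (2 ^ (n - 2) - 1 :: nat)"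
    and roots: "\<And>x::real. (2 ^ (n - 1) - 2) * x ^ 2 - (2 ^ n - 10) * x - 2 ^ (n - 1)
                 = (2 ^ (n - 1) - 2) * (x - t1) * (x - t2)"
    and vs: "distinct vs" "set vs = ncg_verts G"
  shows "char_poly (ncg_DQ G vs) =
      [:- (2 ^ n - 4), 1:] ^ (2 ^ (n - 2))
    * [:- (2 ^ n - 2), 1:] ^ (2 ^ (n - 2) - 1)
    * [:- (2 ^ n + 2 ^ (n - 1) - 8), 1:] ^ (2 ^ (n - 1) - 3)
    * [:- (t1 * (2 ^ (n - 1) - 2) + 3 * 2 ^ (n - 1) - 2), 1:]
    * [:- (t2 * (2 ^ (n - 1) - 2) + 3 * 2 ^ (n - 1) - 2), 1:]"
proof -
  have QG: "qdgrp G a b n"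
    unfolding qdgrp_def qdgrp_axioms_def using assms by auto
  interpret Q: qdgrp G a b n by (rule QG)
  define q where "q = Q.qq"
  define m :: real where "m = 2 * real q"
  have q4: "q \<ge> 4" unfolding q_def using Q.qq4 .
  have nq: "(2::nat) ^ (n - 2) = q" unfolding q_def Q.qq_def ..
  have nm: "(2::nat) ^ (n - 1) = 2 * q" unfolding q_def using Q.mm_eq Q.mm_def by simp
  have nn: "(2::nat) ^ n = 4 * q" unfolding q_def using Q.two_n Q.mm_def by simp
  have rm: "(2::real) ^ (n - 1) = m"
  proof -
    have "real ((2::nat) ^ (n - 1)) = real (2 * q)" using nm by simp
    thus ?thesis unfolding m_def by simp
  qed
  have rn: "(2::real) ^ n = 2 * m"
  proof -
    have "real ((2::nat) ^ n) = real (4 * q)" using nn by simp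
    thus ?thesis unfolding m_def by simp
  qed
  have r0: "- m = (m - 2) * t1 * t2" using roots[of 0] rm by simp
  have t1nz: "t1 \<noteq> 0"
  proof
    assume "t1 = 0"
    hence "m = 0" using r0 by simp
    thus False unfolding m_def using q4 by simp
  qed
  have r1: "(m - 2) * t1 ^ 2 - (2 * m - 10) * t1 - m = 0" using roots[of t1] rm rn by simp
  have teq: "(2 * real q - 2) * t1^2 - (4 * real q - 10) * t1 - 2 * real q = 0"
    using r1 unfolding m_def by (simp add: algebra_simps)
  interpret D: qdg "ncg_verts G" Q.Aset Q.B1set Q.B2set Q.piF a b q t1
    unfolding q_def by (rule Q.qdg_inst[OF t1nz teq[unfolded q_def]])
  have main: "char_poly (ncg_DQ G vs) =
     [:-(t1*(m-2)+3*m-2),1:] * [:-(3*m-2-m/t1),1:] * [:-(3*m-8),1:]^(2*q-3)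
     * [:-(2*m-2),1:]^(q-1) * [:-(2*m-4),1:]^q"
    unfolding ncg_DQ_def ncg_transmission_def m_def
    by (rule D.main_abstract[OF vs]) (use Q.dn_table in simp)
  have e5: "t2 * (m - 2) + 3 * m - 2 = 3*m - 2 - m / t1"
  proof -
    have "t2 * (m - 2) = - m / t1" using r0 t1nz by (simp add: field_simps)
    thus ?thesis by simp
  qed
  have "[:- (2 ^ n - 4), 1:] ^ (2 ^ (n - 2))
    * [:- (2 ^ n - 2), 1:] ^ (2 ^ (n - 2) - 1)
    * [:- (2 ^ n + 2 ^ (n - 1) - 8), 1:] ^ (2 ^ (n - 1) - 3)
    * [:- (t1 * (2 ^ (n - 1) - 2) + 3 * 2 ^ (n - 1) - 2), 1:]
    * [:- (t2 * (2 ^ (n - 1) - 2) + 3 * 2 ^ (n - 1) - 2), 1:]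
    = [:- (2*m - 4), 1:] ^ q * [:- (2*m - 2), 1:] ^ (q - 1) * [:- (3*m - 8), 1:] ^ (2*q - 3)
    * [:-(t1*(m-2)+3*m-2),1:] * [:-(3*m-2-m/t1),1:]"
  proof -
    have "(2::real) ^ n + 2 ^ (n - 1) - 8 = 3 * m - 8" using rn rm by simp
    thus ?thesis unfolding rn rm nq nm e5 by simp
  qed
  thus ?thesis unfolding main by (simp only: ac_simps)
qed


end
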